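(* For any connected graph $G$ of order $n\ge 2$ with maximum degree $\Delta$, $$\max\Big\{\gamma(G),\frac{2}{\Delta}\alpha(G)\Big\}+\beta(G)\le\gamma_{oidR}(G)\le 3\beta(G).$$ Moreover, both bounds are sharp: there exist connected graphs attaining equality in the lower bound and connected graphs attaining equality in the upper bound.
   Context: $\gamma(G)$ is the domination number, $\alpha(G)$ the independence number and $\beta(G)$ the vertex cover number of $G$. A DRD function of $G$ is $f:V(G)\to\{0,1,2,3\}$ such that every vertex with value $0$ has a neighbor with value $3$ or two neighbors with value $2$, and every vertex with value $1$ has a neighbor with value at least $2$; it is an OIDRD function if the set of vertices with value $0$ is independent, and $\gamma_{oidR}(G)$ is the minimum weight $\sum_v f(v)$ of an OIDRD function. *)

theory Defs
  imports Complex_Main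
begin

definition graph :: "'a set \<Rightarrow> ('a \<Rightarrow> 'a \<Rightarrow> bool) \<Rightarrow> bool" where
  "graph V E \<longleftrightarrow> finite V \<and> (\<forall>u v. E u v \<longrightarrow> u \<in> V \<and> v \<in> V \<and> u \<noteq> v \<and> E v u)"

definition connected_graph :: "'a set \<Rightarrow> ('a \<Rightarrow> 'a \<Rightarrow> bool) \<Rightarrow> bool" where
  "connected_graph V E \<longleftrightarrow> V \<noteq> {} \<and> (\<forall>u\<in>V. \<forall>v\<in>V. E\<^sup>*\<^sup>* u v)"

definition degree :: "'a set \<Rightarrow> ('a \<Rightarrow> 'a \<Rightarrow> bool) \<Rightarrow> 'a \<Rightarrow> nat" where
  "degree V E v = card {u\<in>V. E v u}"

definition max_degree :: "'a set \<Rightarrow> ('a \<Rightarrow> 'a \<Rightarrow> bool) \<Rightarrow> nat" where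
  "max_degree V E = Max (degree V E ` V)"

definition dominating_set :: "'a set \<Rightarrow> ('a \<Rightarrow> 'a \<Rightarrow> bool) \<Rightarrow> 'a set \<Rightarrow> bool" where
  "dominating_set V E S \<longleftrightarrow> S \<subseteq> V \<and> (\<forall>v\<in>V - S. \<exists>u\<in>S. E v u)"

definition domination_number :: "'a set \<Rightarrow> ('a \<Rightarrow> 'a \<Rightarrow> bool) \<Rightarrow> nat" where
  "domination_number V E = Min (card ` {S. dominating_set V E S})"

definition independent_set :: "'a set \<Rightarrow> ('a \<Rightarrow> 'a \<Rightarrow> bool) \<Rightarrow> 'a set \<Rightarrow> bool" where
  "independent_set V E S \<longleftrightarrow> S \<subseteq> V \<and> (\<forall>u\<in>S. \<forall>v\<in>S. \<not> E u v)"

definition independence_number :: "'a set \<Rightarrow> ('a \<Rightarrow> 'a \<Rightarrow> bool) \<Rightarrow> nat" where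
  "independence_number V E = Max (card ` {S. independent_set V E S})"

definition vertex_cover :: "'a set \<Rightarrow> ('a \<Rightarrow> 'a \<Rightarrow> bool) \<Rightarrow> 'a set \<Rightarrow> bool" where
  "vertex_cover V E S \<longleftrightarrow> S \<subseteq> V \<and> (\<forall>u v. E u v \<longrightarrow> u \<in> S \<or> v \<in> S)"

definition vertex_cover_number :: "'a set \<Rightarrow> ('a \<Rightarrow> 'a \<Rightarrow> bool) \<Rightarrow> nat" where
  "vertex_cover_number V E = Min (card ` {S. vertex_cover V E S})"

text \<open>Double Roman dominating function; only the values on V matter.\<close>
definition DRD_function :: "'a set \<Rightarrow> ('a \<Rightarrow> 'a \<Rightarrow> bool) \<Rightarrow> ('a \<Rightarrow> nat) \<Rightarrow> bool" where
  "DRD_function V E f \<longleftrightarrow>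
     (\<forall>v\<in>V. f v \<le> 3) \<and>
     (\<forall>v\<in>V. f v = 0 \<longrightarrow>
        (\<exists>u. E v u \<and> f u = 3) \<or> (\<exists>u w. u \<noteq> w \<and> E v u \<and> E v w \<and> f u = 2 \<and> f w = 2)) \<and>
     (\<forall>v\<in>V. f v = 1 \<longrightarrow> (\<exists>u. E v u \<and> f u \<ge> 2))"

definition OIDRD_function :: "'a set \<Rightarrow> ('a \<Rightarrow> 'a \<Rightarrow> bool) \<Rightarrow> ('a \<Rightarrow> nat) \<Rightarrow> bool" where
  "OIDRD_function V E f \<longleftrightarrow> DRD_function V E f \<and> independent_set V E {v\<in>V. f v = 0}"

definition oidR_number :: "'a set \<Rightarrow> ('a \<Rightarrow> 'a \<Rightarrow> bool) \<Rightarrow> nat" where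
  "oidR_number V E = Min ((\<lambda>f. \<Sum>v\<in>V. f v) ` {f. OIDRD_function V E f})"

end

theory Submission
  imports Defs
begin

lemma fin_sub_img:
  assumes "finite V" "{S. P S} \<subseteq> Pow V"
  shows "finite (card ` {S. P S})"
  using assms by (meson finite_Pow_iff finite_imageI finite_subset)

lemma dom_le:
  assumes "finite V" "dominating_set V E S"
  shows "domination_number V E \<le> card S"
  unfolding domination_number_def
proof (rule Min_le)
  show "finite (card ` {S. dominating_set V E S})"
    by (rule fin_sub_img[OF assms(1)]) (auto simp: dominating_set_def)
  show "card S \<in> card ` {S. dominating_set V E S}" using assms(2) by blast
qed

lemma vc_le:
  assumes "finite V" "vertex_cover V E S"
  shows "vertex_cover_number V E \<le> card S"
  unfolding vertex_cover_number_def
proof (rule Min_le)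
  show "finite (card ` {S. vertex_cover V E S})"
    by (rule fin_sub_img[OF assms(1)]) (auto simp: vertex_cover_def)
  show "card S \<in> card ` {S. vertex_cover V E S}" using assms(2) by blast
qed

lemma vc_ex:
  assumes "graph V E"
  shows "\<exists>S. vertex_cover V E S \<and> card S = vertex_cover_number V E"
proof -
  have fin: "finite V" using assms by (simp add: graph_def)
  have "finite (card ` {S. vertex_cover V E S})"
    by (rule fin_sub_img[OF fin]) (auto simp: vertex_cover_def)
  moreover have "vertex_cover V E V" using assms by (auto simp: vertex_cover_def graph_def)
  ultimately have "vertex_cover_number V E \<in> card ` {S. vertex_cover V E S}"
    unfolding vertex_cover_number_def by (intro Min_in) auto
  then show ?thesis by auto
qed

lemma ind_ge:
  assumes "finite V" "independent_set V E S"
  shows "card S \<le> independence_number V E"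
  unfolding independence_number_def
proof (rule Max_ge)
  show "finite (card ` {S. independent_set V E S})"
    by (rule fin_sub_img[OF assms(1)]) (auto simp: independent_set_def)
  show "card S \<in> card ` {S. independent_set V E S}" using assms(2) by blast
qed

lemma ind_ex:
  assumes "finite V"
  shows "\<exists>S. independent_set V E S \<and> card S = independence_number V E"
proof -
  have "finite (card ` {S. independent_set V E S})"
    by (rule fin_sub_img[OF assms]) (auto simp: independent_set_def)
  moreover have "independent_set V E {}" by (auto simp: independent_set_def)
  ultimately have "independence_number V E \<in> card ` {S. independent_set V E S}"
    unfolding independence_number_def by (intro Max_in) auto
  then show ?thesis by auto
qed

lemma oid_fin:
  assumes "finite V"
  shows "finite ((\<lambda>f. \<Sum>v\<in>V. f v) ` {f. OIDRD_function V E f})"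
proof (rule finite_subset)
  show "(\<lambda>f. \<Sum>v\<in>V. f v) ` {f. OIDRD_function V E f} \<subseteq> {..3 * card V}"
  proof
    fix x assume "x \<in> (\<lambda>f. \<Sum>v\<in>V. f v) ` {f. OIDRD_function V E f}"
    then obtain f where f: "OIDRD_function V E f" "x = (\<Sum>v\<in>V. f v)" by auto
    have "(\<Sum>v\<in>V. f v) \<le> (\<Sum>v\<in>V. 3)"
      by (rule sum_mono) (use f(1) in \<open>auto simp: OIDRD_function_def DRD_function_def\<close>)
    then show "x \<in> {..3 * card V}" using f(2) by auto
  qed
qed auto

lemma oid_le:
  assumes "finite V" "OIDRD_function V E f"
  shows "oidR_number V E \<le> (\<Sum>v\<in>V. f v)"
  unfolding oidR_number_def
  by (rule Min_le[OF oid_fin[OF assms(1)]]) (use assms(2) in blast)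

lemma oid_ex:
  assumes "finite V"
  shows "\<exists>f. OIDRD_function V E f \<and> (\<Sum>v\<in>V. f v) = oidR_number V E"
proof -
  have "OIDRD_function V E (\<lambda>_. 2)"
    by (auto simp: OIDRD_function_def DRD_function_def independent_set_def)
  then have "oidR_number V E \<in> (\<lambda>f. \<Sum>v\<in>V. f v) ` {f. OIDRD_function V E f}"
    unfolding oidR_number_def by (intro Min_in oid_fin[OF assms]) auto
  then show ?thesis by auto
qed

lemma deg_le:
  assumes "finite V" "u \<in> V"
  shows "degree V E u \<le> max_degree V E"
  unfolding max_degree_def using assms by auto

lemma card_if: "finite V \<Longrightarrow> (\<Sum>u\<in>V. if P u then 1 else 0) = (card {u\<in>V. P u} :: nat)"
  by (simp add: sum.inter_filter[symmetric])


lemma count_bound: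
  assumes g: "graph V E" and f: "OIDRD_function V E f"
  shows "2 * card {v\<in>V. f v = 0} \<le> max_degree V E * (\<Sum>u\<in>V. f u - 1)"
proof -
  let ?V0 = "{v\<in>V. f v = 0}"
  have fin: "finite V" using g by (simp add: graph_def)
  have key: "\<forall>v\<in>?V0. 2 \<le> (\<Sum>u\<in>{u\<in>V. E v u}. f u - 1)"
  proof
    fix v assume v: "v \<in> ?V0"
    have finN: "finite {u\<in>V. E v u}" using fin by simp
    from f v have "(\<exists>u. E v u \<and> f u = 3) \<or> (\<exists>u w. u \<noteq> w \<and> E v u \<and> E v w \<and> f u = 2 \<and> f w = 2)"
      by (auto simp: OIDRD_function_def DRD_function_def)
    then show "2 \<le> (\<Sum>u\<in>{u\<in>V. E v u}. f u - 1)"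
    proof
      assume "\<exists>u. E v u \<and> f u = 3"
      then obtain u where u: "E v u" "f u = 3" by blast
      have "u \<in> V" using g u(1) by (auto simp: graph_def)
      have "(\<Sum>u\<in>{u}. f u - 1) \<le> (\<Sum>u\<in>{u\<in>V. E v u}. f u - 1)"
        by (rule sum_mono2[OF finN]) (use u \<open>u\<in>V\<close> in auto)
      then show ?thesis using u by simp
    next
      assume "\<exists>u w. u \<noteq> w \<and> E v u \<and> E v w \<and> f u = 2 \<and> f w = 2"
      then obtain u w where u: "u \<noteq> w" "E v u" "E v w" "f u = 2" "f w = 2" by blast
      have "u \<in> V" "w \<in> V" using g u by (auto simp: graph_def)
      have "(\<Sum>u\<in>{u,w}. f u - 1) \<le> (\<Sum>u\<in>{u\<in>V. E v u}. f u - 1)"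
        by (rule sum_mono2[OF finN]) (use u \<open>u\<in>V\<close> \<open>w\<in>V\<close> in auto)
      then show ?thesis using u by simp
    qed
  qed
  have "2 * card ?V0 = (\<Sum>v\<in>?V0. 2)" by simp
  also have "\<dots> \<le> (\<Sum>v\<in>?V0. \<Sum>u\<in>{u\<in>V. E v u}. f u - 1)"
    by (rule sum_mono) (use key in blast)
  also have "\<dots> = (\<Sum>v\<in>?V0. \<Sum>u\<in>V. if E v u then f u - 1 else 0)"
    by (rule sum.cong[OF refl], rule sum.inter_filter[OF fin])
  also have "\<dots> = (\<Sum>u\<in>V. \<Sum>v\<in>?V0. if E v u then f u - 1 else 0)"
    by (rule sum.swap)
  also have "\<dots> = (\<Sum>u\<in>V. (f u - 1) * card {v\<in>?V0. E v u})"
  proof (rule sum.cong[OF refl])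
    fix u assume "u \<in> V"
    have "(\<Sum>v\<in>?V0. if E v u then f u - 1 else 0) = (\<Sum>v\<in>{v\<in>?V0. E v u}. f u - 1)"
      by (rule sum.inter_filter[symmetric]) (use fin in simp)
    then show "(\<Sum>v\<in>?V0. if E v u then f u - 1 else 0) = (f u - 1) * card {v\<in>?V0. E v u}"
      by simp
  qed
  also have "\<dots> \<le> (\<Sum>u\<in>V. (f u - 1) * max_degree V E)"
  proof (rule sum_mono)
    fix u assume u: "u \<in> V"
    have "{v\<in>?V0. E v u} \<subseteq> {x\<in>V. E u x}" using g by (auto simp: graph_def)
    then have "card {v\<in>?V0. E v u} \<le> degree V E u"
      unfolding degree_def by (rule card_mono[rotated]) (use fin in simp)
    also have "\<dots> \<le> max_degree V E" by (rule deg_le[OF fin u])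
    finally show "(f u - 1) * card {v\<in>?V0. E v u} \<le> (f u - 1) * max_degree V E" by simp
  qed
  also have "\<dots> = max_degree V E * (\<Sum>u\<in>V. f u - 1)"
    by (simp add: sum_distrib_left mult.commute)
  finally show ?thesis .
qed


lemma two_nbrs:
  assumes g: "graph V E" and x: "x \<in> V" and d: "max_degree V E = 1"
    and e: "E x y" "E x y'"
  shows "y = y'"
proof (rule ccontr)
  assume ne: "y \<noteq> y'"
  have fin: "finite V" using g by (simp add: graph_def)
  have "{y,y'} \<subseteq> {u\<in>V. E x u}" using g e by (auto simp: graph_def)
  then have "card {y,y'} \<le> degree V E x"
    unfolding degree_def by (rule card_mono[rotated]) (use fin in simp)
  also have "\<dots> \<le> 1" using deg_le[OF fin x, of E] d by simp
  finally show False using ne by simp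
qed

lemma k2:
  assumes g: "graph V E" and c: "connected_graph V E" and n: "card V \<ge> 2"
    and d: "max_degree V E = 1"
  shows "\<exists>a b. V = {a,b} \<and> E a b \<and> a \<noteq> b"
proof -
  have fin: "finite V" using g by (simp add: graph_def)
  obtain a b where ab: "a \<in> V" "b \<in> V" "a \<noteq> b"
  proof -
    have "\<not> (\<forall>a\<in>V. \<forall>b\<in>V. a = b)" using card_le_Suc0_iff_eq[OF fin] n by simp
    then show ?thesis using that by blast
  qed
  have "E\<^sup>*\<^sup>* a b" using c ab by (auto simp: connected_graph_def)
  then obtain c' where ac: "E a c'"
    using ab(3) by (metis converse_rtranclpE)
  have cV: "c' \<in> V" and ca: "E c' a" and acn: "a \<noteq> c'" using g ac by (auto simp: graph_def)
  have reach: "x \<in> {a,c'}" if "E\<^sup>*\<^sup>* a x" for x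
    using that
  proof (induction rule: rtranclp_induct)
    case base then show ?case by simp
    next
    case (step x y)
    from step(3) have "x = a \<or> x = c'" by simp
    then show ?case
    proof
      assume "x = a"
      then show ?thesis using two_nbrs[OF g ab(1) d ac] step(2) by auto
    next
      assume "x = c'"
      then show ?thesis using two_nbrs[OF g cV d ca] step(2) by auto
    qed
  qed
  have "V \<subseteq> {a,c'}"
  proof
    fix x assume "x \<in> V"
    then have "E\<^sup>*\<^sup>* a x" using c ab by (auto simp: connected_graph_def)
    then show "x \<in> {a,c'}" by (rule reach)
  qed
  then have "V = {a,c'}" using ab cV by auto
  then show ?thesis using ac acn by blast
qed

lemma upper:
  assumes g: "graph V E" and c: "connected_graph V E" and n: "card V \<ge> 2"
  shows "oidR_number V E \<le> 3 * vertex_cover_number V E"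
proof -
  have fin: "finite V" using g by (simp add: graph_def)
  obtain S where S: "vertex_cover V E S" "card S = vertex_cover_number V E"
    using vc_ex[OF g] by blast
  have SV: "S \<subseteq> V" using S by (simp add: vertex_cover_def)
  define f where "f = (\<lambda>v. if v \<in> S then 3 else (0::nat))"
  have nb: "\<exists>u. E v u" if "v \<in> V" for v
  proof -
    obtain w where "w \<in> V" "w \<noteq> v"
    proof -
      have "\<not> (\<forall>a\<in>V. \<forall>b\<in>V. a = b)" using card_le_Suc0_iff_eq[OF fin] n by simp
      then show ?thesis using that \<open>v \<in> V\<close> by blast
    qed
    then have "E\<^sup>*\<^sup>* v w" using c \<open>v\<in>V\<close> by (auto simp: connected_graph_def)
    then show ?thesis using \<open>w \<noteq> v\<close> by (metis converse_rtranclpE)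
  qed
  have "OIDRD_function V E f"
    unfolding OIDRD_function_def DRD_function_def independent_set_def
  proof (intro conjI ballI impI)
    fix v assume v: "v \<in> V" "f v = 0"
    then obtain u where u: "E v u" using nb by blast
    have "v \<notin> S" using v by (auto simp: f_def split: if_splits)
    then have "u \<in> S" using S(1) u by (auto simp: vertex_cover_def)
    then show "(\<exists>u. E v u \<and> f u = 3) \<or> (\<exists>u w. u \<noteq> w \<and> E v u \<and> E v w \<and> f u = 2 \<and> f w = 2)"
      using u by (auto simp: f_def)
  next
    fix u v assume "u \<in> {v \<in> V. f v = 0}" "v \<in> {v \<in> V. f v = 0}"
    then show "\<not> E u v" using S(1) by (auto simp: f_def vertex_cover_def split: if_splits)
  qed (auto simp: f_def split: if_splits)
  then have "oidR_number V E \<le> (\<Sum>v\<in>V. f v)" by (rule oid_le[OF fin])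
  also have "(\<Sum>v\<in>V. f v) = (\<Sum>v\<in>S. 3)"
    unfolding f_def using sum.inter_filter[OF fin, of "\<lambda>_. 3::nat" "\<lambda>v. v \<in> S"] SV
    by (simp add: Int_absorb1 Collect_conj_eq[symmetric]) (metis (no_types) Collect_mem_eq Int_def Int_absorb1 SV)
  finally show ?thesis using S(2) by simp
qed


lemma lower:
  assumes g: "graph V E" and c: "connected_graph V E" and n: "card V \<ge> 2"
  shows "real (domination_number V E) + real (vertex_cover_number V E) \<le> real (oidR_number V E)
    \<and> 2 / real (max_degree V E) * real (independence_number V E) + real (vertex_cover_number V E)
        \<le> real (oidR_number V E)"
proof -
  have fin: "finite V" using g by (simp add: graph_def)
  obtain f where f: "OIDRD_function V E f" and w: "(\<Sum>v\<in>V. f v) = oidR_number V E"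
    using oid_ex[OF fin] by blast
  have f3: "\<forall>v\<in>V. f v \<le> 3" using f by (simp add: OIDRD_function_def DRD_function_def)
  define z where "z = card {v\<in>V. f v = 0}"
  define c1 where "c1 = card {v\<in>V. f v \<ge> 1}"
  define c2 where "c2 = card {v\<in>V. f v \<ge> 2}"
  define G where "G = (\<Sum>u\<in>V. f u - 1)"
  define W where "W = oidR_number V E"
  define \<alpha> where "\<alpha> = independence_number V E"
  define \<beta> where "\<beta> = vertex_cover_number V E"
  define \<gamma> where "\<gamma> = domination_number V E"
  define \<Delta> where "\<Delta> = max_degree V E"
  have e1: "W = G + c1"
  proof -
    have "(\<Sum>v\<in>V. f v) = (\<Sum>v\<in>V. (f v - 1) + (if f v \<ge> 1 then 1 else 0))"
      by (rule sum.cong) auto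
    also have "\<dots> = G + c1" by (simp add: sum.distrib G_def c1_def card_if[OF fin])
    finally show ?thesis using w W_def by simp
  qed
  have e2: "card V = z + c1"
  proof -
    have "card V = (\<Sum>v\<in>V. (1::nat))" by simp
    also have "\<dots> = (\<Sum>v\<in>V. (if f v = 0 then 1 else 0) + (if f v \<ge> 1 then 1 else 0))"
      by (rule sum.cong) auto
    also have "\<dots> = z + c1" by (simp only: sum.distrib z_def c1_def card_if[OF fin])
    finally show ?thesis .
  qed
  have e3: "c1 + c2 \<le> W"
  proof -
    have "c1 + c2 = (\<Sum>v\<in>V. (if f v \<ge> 1 then 1 else 0) + (if f v \<ge> 2 then 1 else 0))"
      by (simp only: sum.distrib c2_def c1_def card_if[OF fin])
    also have "\<dots> \<le> (\<Sum>v\<in>V. f v)" by (rule sum_mono) auto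
    finally show ?thesis using w W_def by simp
  qed
  have e4: "\<gamma> \<le> c2" unfolding \<gamma>_def c2_def
  proof (rule dom_le[OF fin])
    show "dominating_set V E {v \<in> V. 2 \<le> f v}"
      unfolding dominating_set_def
    proof (intro conjI ballI)
      fix v assume v: "v \<in> V - {v \<in> V. 2 \<le> f v}"
      then have "f v = 0 \<or> f v = 1" by auto
      then show "\<exists>u\<in>{v \<in> V. 2 \<le> f v}. E v u"
      proof
        assume "f v = 0"
        then have "(\<exists>u. E v u \<and> f u = 3) \<or> (\<exists>u w. u \<noteq> w \<and> E v u \<and> E v w \<and> f u = 2 \<and> f w = 2)"
          using f v by (auto simp: OIDRD_function_def DRD_function_def)
        then obtain u where "E v u" "f u \<ge> 2" by auto
        then show ?thesis using g by (auto simp: graph_def)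
      next
        assume "f v = 1"
        then have "\<exists>u. E v u \<and> f u \<ge> 2"
          using f v by (auto simp: OIDRD_function_def DRD_function_def)
        then show ?thesis using g by (auto simp: graph_def)
      qed
    qed auto
  qed
  have e5: "\<beta> \<le> c1" unfolding \<beta>_def c1_def
  proof (rule vc_le[OF fin])
    have "independent_set V E {v\<in>V. f v = 0}" using f by (simp add: OIDRD_function_def)
    then show "vertex_cover V E {v \<in> V. 1 \<le> f v}"
      unfolding vertex_cover_def
    proof (intro conjI allI impI)
      fix u v assume e: "E u v"
      have uv: "u \<in> V" "v \<in> V" using g e by (auto simp: graph_def)
      show "u \<in> {v \<in> V. 1 \<le> f v} \<or> v \<in> {v \<in> V. 1 \<le> f v}"
      proof (rule ccontr)
        assume "\<not> ?thesis" then have "f u = 0" "f v = 0" using uv by auto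
        then show False using \<open>independent_set V E {v\<in>V. f v = 0}\<close> e uv
          unfolding independent_set_def by auto
      qed
    qed auto
  qed
  obtain I where I: "independent_set V E I" "card I = \<alpha>"
    using ind_ex[OF fin] \<alpha>_def by blast
  have e6: "\<beta> + \<alpha> \<le> card V"
  proof -
    have IV: "I \<subseteq> V" using I by (simp add: independent_set_def)
    have "vertex_cover V E (V - I)"
      using I(1) g unfolding independent_set_def vertex_cover_def graph_def by blast
    then have "\<beta> \<le> card (V - I)" unfolding \<beta>_def by (rule vc_le[OF fin])
    also have "\<dots> = card V - \<alpha>" using I IV fin by (simp add: card_Diff_subset finite_subset)
    finally have "\<beta> \<le> card V - \<alpha>" .
    moreover have "\<alpha> \<le> card V" using card_mono[OF fin IV] I(2) by simp
    ultimately show ?thesis by simp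
  qed
  have e7: "z \<le> \<alpha>" unfolding z_def \<alpha>_def
    by (rule ind_ge[OF fin]) (use f in \<open>simp add: OIDRD_function_def\<close>)
  have e8: "2 * z \<le> \<Delta> * G" unfolding z_def \<Delta>_def G_def by (rule count_bound[OF g f])
  have A: "\<gamma> + \<beta> \<le> W" using e3 e4 e5 by simp
  have B: "2 / real \<Delta> * real \<alpha> + real \<beta> \<le> real W"
  proof (cases "\<Delta> = 1")
    case True
    then have "max_degree V E = 1" using \<Delta>_def by simp
    then obtain a b where ab: "V = {a,b}" "E a b" "a \<noteq> b"
      using k2[OF g c n] by blast
    have "\<alpha> \<le> 1"
    proof -
      have "I \<subseteq> V" "\<not> (a \<in> I \<and> b \<in> I)" using I(1) ab by (auto simp: independent_set_def)
      then have "I \<subseteq> {a} \<or> I \<subseteq> {b}" using ab by auto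
      then show ?thesis
      proof
        assume "I \<subseteq> {a}" then have "card I \<le> card {a}" by (intro card_mono) auto
        then show ?thesis using I(2) by simp
      next
        assume "I \<subseteq> {b}" then have "card I \<le> card {b}" by (intro card_mono) auto
        then show ?thesis using I(2) by simp
      qed
    qed
    have Eb: "\<And>u. E a u \<Longrightarrow> u = b" "\<And>u. E b u \<Longrightarrow> u = a"
      using g ab by (auto simp: graph_def)
    have Eba: "E b a" using g ab by (auto simp: graph_def)
    have "3 \<le> f a + f b"
    proof -
      have D: "\<forall>v\<in>V. f v = 0 \<longrightarrow>
        (\<exists>u. E v u \<and> f u = 3) \<or> (\<exists>u w. u \<noteq> w \<and> E v u \<and> E v w \<and> f u = 2 \<and> f w = 2)"
        "\<forall>v\<in>V. f v = 1 \<longrightarrow> (\<exists>u. E v u \<and> f u \<ge> 2)"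
        using f by (auto simp: OIDRD_function_def DRD_function_def)
      have aV: "a \<in> V" "b \<in> V" using ab by auto
      have Z: "f y = 3" if "f x = 0" "x \<in> V" "\<And>u. E x u \<Longrightarrow> u = y" for x y
      proof -
        from D(1) that(1,2) have "(\<exists>u. E x u \<and> f u = 3) \<or> (\<exists>u w. u \<noteq> w \<and> E x u \<and> E x w \<and> f u = 2 \<and> f w = 2)"
          by blast
        then show ?thesis
        proof (elim disjE exE conjE)
          fix u assume "E x u" "f u = 3" then show ?thesis using that(3) by metis
        next
          fix u w assume "u \<noteq> w" "E x u" "E x w" then show ?thesis using that(3) by metis
        qed
      qed
      have O: "f y \<ge> 2" if "f x = 1" "x \<in> V" "\<And>u. E x u \<Longrightarrow> u = y" for x y
      proof -
        from D(2) that(1,2) obtain u where "E x u" "f u \<ge> 2" by blast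
        then show ?thesis using that(3) by metis
      qed
      have "f a = 0 \<longrightarrow> f b = 3" using Z[of a b] aV Eb by blast
      moreover have "f b = 0 \<longrightarrow> f a = 3" using Z[of b a] aV Eb by blast
      moreover have "f a = 1 \<longrightarrow> f b \<ge> 2" using O[of a b] aV Eb by blast
      moreover have "f b = 1 \<longrightarrow> f a \<ge> 2" using O[of b a] aV Eb by blast
      ultimately show ?thesis by linarith
    qed
    then have "3 \<le> W" using w W_def ab by simp
    moreover have "card V = 2" using ab by simp
    ultimately have "2 * \<alpha> + \<beta> \<le> W" using e6 \<open>\<alpha> \<le> 1\<close> by linarith
    then have "real (2 * \<alpha> + \<beta>) \<le> real W" by (metis of_nat_le_iff)
    then show ?thesis using True by simp
  next
    case False
    show ?thesis
    proof (cases "\<Delta> = 0")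
      case True
      then show ?thesis using e1 e5 by simp
    next
      case False
      with \<open>\<Delta> \<noteq> 1\<close> have D2: "\<Delta> \<ge> 2" by simp
      have "2 * \<alpha> = 2 * z + 2 * (\<alpha> - z)" using e7 by simp
      also have "\<dots> \<le> \<Delta> * G + \<Delta> * (\<alpha> - z)" using e8 D2 by (intro add_mono mult_right_mono) auto
      finally have "2 * \<alpha> \<le> \<Delta> * (G + (\<alpha> - z))" by (simp add: algebra_simps)
      then have "real (2 * \<alpha>) \<le> real \<Delta> * real (G + (\<alpha> - z))" by (metis of_nat_le_iff of_nat_mult)
      then have "2 * real \<alpha> / real \<Delta> \<le> real (G + (\<alpha> - z))"
        using D2 by (simp add: divide_le_eq mult.commute)
      then have "2 / real \<Delta> * real \<alpha> \<le> real G + real \<alpha> - real z" using e7 by simp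
      then show ?thesis using e1 e2 e6 by simp
    qed
  qed
  show ?thesis using A B unfolding W_def \<alpha>_def \<beta>_def \<gamma>_def \<Delta>_def by simp
qed


theorem theorem4:
  "(\<forall>(V :: 'a set) E. graph V E \<and> connected_graph V E \<and> card V \<ge> 2 \<longrightarrow>
      max (real (domination_number V E))
          (2 / real (max_degree V E) * real (independence_number V E))
        + real (vertex_cover_number V E) \<le> real (oidR_number V E)
      \<and> oidR_number V E \<le> 3 * vertex_cover_number V E)
   \<and> (\<exists>(V :: nat set) E. graph V E \<and> connected_graph V E \<and> card V \<ge> 2 \<and>
      max (real (domination_number V E))
          (2 / real (max_degree V E) * real (independence_number V E))
        + real (vertex_cover_number V E) = real (oidR_number V E))
   \<and> (\<exists>(V :: nat set) E. graph V E \<and> connected_graph V E \<and> card V \<ge> 2 \<and>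
      oidR_number V E = 3 * vertex_cover_number V E)"
proof -
  have P1: "\<forall>(V :: 'a set) E. graph V E \<and> connected_graph V E \<and> card V \<ge> 2 \<longrightarrow>
      max (real (domination_number V E))
          (2 / real (max_degree V E) * real (independence_number V E))
        + real (vertex_cover_number V E) \<le> real (oidR_number V E)
      \<and> oidR_number V E \<le> 3 * vertex_cover_number V E"
  proof (intro allI impI)
    fix V :: "'a set" and E assume h: "graph V E \<and> connected_graph V E \<and> card V \<ge> 2"
    then have L: "real (domination_number V E) + real (vertex_cover_number V E) \<le> real (oidR_number V E)
      \<and> 2 / real (max_degree V E) * real (independence_number V E) + real (vertex_cover_number V E)
        \<le> real (oidR_number V E)" using lower by blast
    have U: "oidR_number V E \<le> 3 * vertex_cover_number V E" using h upper by blast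
    show "max (real (domination_number V E))
          (2 / real (max_degree V E) * real (independence_number V E))
        + real (vertex_cover_number V E) \<le> real (oidR_number V E)
      \<and> oidR_number V E \<le> 3 * vertex_cover_number V E"
      using L U by (simp add: max_def)
  qed
  define E0 :: "nat \<Rightarrow> nat \<Rightarrow> bool" where "E0 = (\<lambda>u v. u = 0 \<and> v = 1 \<or> u = 1 \<and> v = 0)"
  define V0 :: "nat set" where "V0 = {0,1}"
  have fin: "finite V0" by (simp add: V0_def)
  have g: "graph V0 E0" by (auto simp: graph_def E0_def V0_def)
  have c: "connected_graph V0 E0"
    unfolding connected_graph_def
  proof (intro conjI ballI)
    fix u v assume "u \<in> V0" "v \<in> V0"
    then have "u = v \<or> E0 u v" by (auto simp: V0_def E0_def)
    then show "E0\<^sup>*\<^sup>* u v" by auto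
  qed (simp add: V0_def)
  have n: "card V0 = 2" by (simp add: V0_def)
  have b1: "vertex_cover_number V0 E0 = 1"
  proof -
    have "vertex_cover V0 E0 {0}" by (auto simp: vertex_cover_def V0_def E0_def)
    then have "vertex_cover_number V0 E0 \<le> 1" using vc_le[OF fin] by fastforce
    moreover obtain S where S: "vertex_cover V0 E0 S" "card S = vertex_cover_number V0 E0"
      using vc_ex[OF g] by blast
    have "S \<noteq> {}" using S(1) by (auto simp: vertex_cover_def E0_def)
    moreover have "finite S" using S(1) fin by (auto simp: vertex_cover_def intro: finite_subset)
    ultimately show ?thesis using S(2) by (metis card_0_eq le_antisym less_one linorder_not_le)
  qed
  have a1: "independence_number V0 E0 = 1"
  proof -
    have "independent_set V0 E0 {0}" by (auto simp: independent_set_def V0_def E0_def)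
    then have "1 \<le> independence_number V0 E0" using ind_ge[OF fin] by fastforce
    moreover obtain I where I: "independent_set V0 E0 I" "card I = independence_number V0 E0"
      using ind_ex[OF fin] by blast
    have "I \<subseteq> V0" "\<not> (0 \<in> I \<and> 1 \<in> I)" using I(1) by (auto simp: independent_set_def E0_def)
    then have "I \<subseteq> {0} \<or> I \<subseteq> {1}" by (auto simp: V0_def)
    then have "card I \<le> 1"
    proof
      assume "I \<subseteq> {0}" then have "card I \<le> card {0::nat}" by (intro card_mono) auto
      then show ?thesis by simp
    next
      assume "I \<subseteq> {1}" then have "card I \<le> card {1::nat}" by (intro card_mono) auto
      then show ?thesis by simp
    qed
    ultimately show ?thesis using I(2) by simp
  qed
  have d1: "max_degree V0 E0 = 1"
  proof -
    have "{u\<in>V0. E0 0 u} = {1}" "{u\<in>V0. E0 1 u} = {0}" by (auto simp: V0_def E0_def)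
    then have "degree V0 E0 ` V0 = {1}" by (auto simp: degree_def V0_def)
    then show ?thesis by (simp add: max_degree_def)
  qed
  have gam: "domination_number V0 E0 \<le> 1"
  proof -
    have "dominating_set V0 E0 {0}" by (auto simp: dominating_set_def V0_def E0_def)
    then show ?thesis using dom_le[OF fin] by fastforce
  qed
  have W: "oidR_number V0 E0 = 3"
  proof -
    have "oidR_number V0 E0 \<le> 3" using upper[OF g c] n b1 by simp
    moreover have "2 / real (max_degree V0 E0) * real (independence_number V0 E0)
        + real (vertex_cover_number V0 E0) \<le> real (oidR_number V0 E0)"
      using lower[OF g c] n by simp
    then have "3 \<le> oidR_number V0 E0" using a1 b1 d1 by simp
    ultimately show ?thesis by simp
  qed
  have M: "max (real (domination_number V0 E0))
          (2 / real (max_degree V0 E0) * real (independence_number V0 E0))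
        + real (vertex_cover_number V0 E0) = real (oidR_number V0 E0)"
    using gam a1 b1 d1 W by (simp add: max_def)
  show ?thesis
    using P1 g c n M W b1 by (intro conjI) (blast, metis order_refl, metis order_refl mult.right_neutral)
qed

end
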